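(* Assume the ranking mechanism is consistent. Then for every $n\ge 1$, every CDF $K_n$ and every $t\in\mathbb R$, $$\mathbb E\big(F_{n;jps}(t)\big)=\frac1H\sum_{r=1}^H \mathbb E\big(K_n(t-X_{[r]})\big)=\mathbb E\big(K_n(t-X)\big)=\mathbb E\big(F_{n;srs}(t)\big).$$
   Context: Setting (judgment post stratification, JPS). Fix an integer set size $H\ge 2$ and a sample size $n\ge 1$. A JPS sample is a collection of $n$ i.i.d. pairs $(X_1,R_1),\dots,(X_n,R_n)$, where $R_i\in\{1,\dots,H\}$ with $P(R_i=r)=1/H$ for each $r$, and conditionally on $R_i=r$ the real random variable $X_i$ has CDF $F_{[r]}$; $X_{[r]}$ denotes a random variable with CDF $F_{[r]}$. Let $F$ be the population CDF and $X$ a random variable with CDF $F$. The ranking mechanism is called consistent if $F(t)=\frac1H\sum_{r=1}^H F_{[r]}(t)$ for all $t\in\mathbb R$ (so each $X_i$ has marginal CDF $F$). Define $I_{ir}=\mathbb I(R_i=r)$, $N_r=\sum_{i=1}^n I_{ir}$, $J_r=1/N_r$ if $N_r>0$ and $J_r=0$ otherwise, $d_n=\sum_{r=1}^H\mathbb I(N_r>0)$, and $W_r=\mathbb I(N_r>0)/d_n$. Given a CDF $K_n$ on $\mathbb R$, define $F_{n;[r]}(t)=\frac1{N_r}\sum_{i=1}^n K_n(t-X_i)I_{ir}$ if $N_r>0$ and $F_{n;[r]}(t)=0$ otherwise, and the JPS estimator $F_{n;jps}(t)=\sum_{r=1}^H W_rF_{n;[r]}(t)$. For an i.i.d. sample $X_1,\dots,X_n$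 from $F$ (simple random sample, SRS), the SRS estimator is $F_{n;srs}(t)=\frac1n\sum_{i=1}^n K_n(t-X_i)$. *)

theory Defs
  imports "HOL-Probability.Probability"
begin

definition is_cdf :: "(real \<Rightarrow> real) \<Rightarrow> bool" where
  "is_cdf G \<longleftrightarrow> mono G \<and> (\<forall>a. continuous (at_right a) G) \<and>
     (G \<longlongrightarrow> 0) at_bot \<and> (G \<longlongrightarrow> 1) at_top"

text \<open>Observed sample: values x i and judgment ranks R i for i < n.\<close>
definition jps_N :: "nat \<Rightarrow> (nat \<Rightarrow> nat) \<Rightarrow> nat \<Rightarrow> nat" where
  "jps_N n R r = card {i\<in>{..<n}. R i = r}"

definition jps_d :: "nat \<Rightarrow> nat \<Rightarrow> (nat \<Rightarrow> nat) \<Rightarrow> nat" where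
  "jps_d H n R = card {r\<in>{1..H}. jps_N n R r > 0}"

definition jps_W :: "nat \<Rightarrow> nat \<Rightarrow> (nat \<Rightarrow> nat) \<Rightarrow> nat \<Rightarrow> real" where
  "jps_W H n R r = (if jps_N n R r > 0 then 1 / real (jps_d H n R) else 0)"

definition jps_stratum :: "nat \<Rightarrow> (real \<Rightarrow> real) \<Rightarrow> (nat \<Rightarrow> real) \<Rightarrow> (nat \<Rightarrow> nat) \<Rightarrow> nat \<Rightarrow> real \<Rightarrow> real" where
  "jps_stratum n K x R r t =
     (if jps_N n R r > 0
      then (1 / real (jps_N n R r)) * (\<Sum>i<n. K (t - x i) * (if R i = r then 1 else 0))
      else 0)"

definition jps_est :: "nat \<Rightarrow> nat \<Rightarrow> (real \<Rightarrow> real) \<Rightarrow> (nat \<Rightarrow> real) \<Rightarrow> (nat \<Rightarrow> nat) \<Rightarrow> real \<Rightarrow> real" where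
  "jps_est H n K x R t = (\<Sum>r=1..H. jps_W H n R r * jps_stratum n K x R r t)"

definition srs_est :: "nat \<Rightarrow> (real \<Rightarrow> real) \<Rightarrow> (nat \<Rightarrow> real) \<Rightarrow> real \<Rightarrow> real" where
  "srs_est n K y t = (1 / real n) * (\<Sum>i<n. K (t - y i))"

end

theory Submission
  imports Defs
begin


lemma is_cdf_props:
  assumes "is_cdf G"
  shows "\<And>x y. x \<le> y \<Longrightarrow> G x \<le> G y" "\<And>a. continuous (at_right a) G"
    "(G \<longlongrightarrow> 0) at_bot" "(G \<longlongrightarrow> 1) at_top"
  using assms unfolding is_cdf_def mono_def by auto

lemma is_cdf_bounds:
  assumes "is_cdf G" shows "0 \<le> G x" "G x \<le> 1"
proof -
  note p = is_cdf_props[OF assms]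
  show "0 \<le> G x"
    using p(3) by (rule tendsto_upperbound) (auto simp: eventually_at_bot_linorder p(1) intro!: exI[of _ x])
  show "G x \<le> 1"
    using p(4) by (rule tendsto_lowerbound) (auto simp: eventually_at_top_linorder p(1) intro!: exI[of _ x])
qed

lemma is_cdf_measurable: "is_cdf G \<Longrightarrow> G \<in> borel_measurable borel"
  by (rule borel_measurable_mono) (auto simp: is_cdf_def)

lemma law_lemma:
  fixes M :: "'a measure" and X g :: "'a \<Rightarrow> real" and G f :: "real \<Rightarrow> real"
  assumes M: "prob_space M" and G: "is_cdf G"
    and X[measurable]: "X \<in> borel_measurable M" and g[measurable]: "g \<in> borel_measurable M"
    and gnn: "\<And>\<omega>. 0 \<le> g \<omega>" and gint: "integrable M g"
    and law: "\<And>s. (\<integral>\<omega>. g \<omega> * indicator {..s} (X \<omega>) \<partial>M) = G s"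
    and f[measurable]: "f \<in> borel_measurable borel"
  shows "(\<integral>x. f x \<partial>interval_measure G) = (\<integral>\<omega>. g \<omega> * f (X \<omega>) \<partial>M)"
proof -
  note p = is_cdf_props[OF G]
  define \<nu> where "\<nu> = distr (density M g) borel X"
  have sets\<nu>: "sets \<nu> = sets borel" unfolding \<nu>_def by simp
  have "emeasure (density M g) (space M) = (\<integral>\<^sup>+\<omega>. ennreal (g \<omega>) \<partial>M)"
    by (subst emeasure_density) (auto intro!: nn_integral_cong)
  also have "\<dots> = ennreal (\<integral>\<omega>. g \<omega> \<partial>M)"
    by (rule nn_integral_eq_integral[OF gint]) (simp add: gnn)
  finally have fin: "emeasure \<nu> (space \<nu>) \<noteq> \<infinity>"
    unfolding \<nu>_def by (simp add: emeasure_distr)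
  interpret fm: finite_measure \<nu> using fin by (rule finite_measureI)
  have fbm: "finite_borel_measure \<nu>"
    by (rule finite_borel_measure.intro[OF fm.finite_measure_axioms]) (unfold_locales, simp add: sets\<nu>)
  have "cdf \<nu> = G"
  proof
    fix s
    have "cdf \<nu> s = measure \<nu> {..s}" by (simp add: cdf_def)
    also have "\<dots> = (\<integral>x. indicator {..s} x \<partial>\<nu>)"
      by (simp add: sets\<nu> sets_eq_imp_space_eq[OF sets\<nu>])
    also have "\<dots> = (\<integral>\<omega>. indicator {..s} (X \<omega>) \<partial>density M g)"
      unfolding \<nu>_def by (rule integral_distr) auto
    also have "\<dots> = (\<integral>\<omega>. g \<omega> * indicator {..s} (X \<omega>) \<partial>M)"
      by (subst integral_density) (auto simp: gnn)
    finally show "cdf \<nu> s = G s" using law by simp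
  qed
  moreover have "cdf (interval_measure G) = G"
    by (rule cdf_interval_measure) (use p in auto)
  moreover have "finite_borel_measure (interval_measure G)"
    by (rule finite_borel_measure_interval_measure[of G 1]) (use p in auto)
  ultimately have eq: "interval_measure G = \<nu>"
    using cdf_unique'[OF _ fbm] by metis
  have "(\<integral>x. f x \<partial>interval_measure G) = (\<integral>\<omega>. f (X \<omega>) \<partial>density M g)"
    unfolding eq \<nu>_def by (rule integral_distr) auto
  also have "\<dots> = (\<integral>\<omega>. g \<omega> * f (X \<omega>) \<partial>M)"
    by (subst integral_density) (auto simp: gnn)
  finally show ?thesis .
qed



lemma jps_est_cong:
  assumes "\<And>i. i < n \<Longrightarrow> R i = R' i"
  shows "jps_est H n K x R t = jps_est H n K x R' t"
proof -
  have N: "jps_N n R r = jps_N n R' r" for r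
    unfolding jps_N_def using assms by (intro arg_cong[where f=card]) auto
  have d: "jps_d H n R = jps_d H n R'" unfolding jps_d_def using N by simp
  have W: "jps_W H n R r = jps_W H n R' r" for r unfolding jps_W_def using N d by simp
  have S: "jps_stratum n K x R r t = jps_stratum n K x R' r t" for r
    unfolding jps_stratum_def using N assms by (auto intro!: sum.cong)
  show ?thesis unfolding jps_est_def using W S by simp
qed

lemma jps_stratum_alt:
  "jps_stratum n K x R r t = (1 / real (jps_N n R r)) * (\<Sum>i<n. K (t - x i) * (if R i = r then 1 else 0))"
  unfolding jps_stratum_def by auto

lemma jps_W_sum:
  assumes "n \<ge> 1" "\<And>i. i < n \<Longrightarrow> \<rho> i \<in> {1..H}"
  shows "(\<Sum>r=1..H. jps_W H n \<rho> r) = 1"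
proof -
  have "0 \<in> {i\<in>{..<n}. \<rho> i = \<rho> 0}" using assms by auto
  hence "jps_N n \<rho> (\<rho> 0) > 0" unfolding jps_N_def by (auto simp: card_gt_0_iff)
  moreover have "\<rho> 0 \<in> {1..H}" using assms by auto
  ultimately have "jps_d H n \<rho> > 0" unfolding jps_d_def by (auto simp: card_gt_0_iff)
  moreover have "(\<Sum>r=1..H. jps_W H n \<rho> r) = real (jps_d H n \<rho>) * (1 / real (jps_d H n \<rho>))"
    unfolding jps_W_def jps_d_def by (simp add: sum.If_cases Int_def conj_commute)
  ultimately show ?thesis by simp
qed

definition swp :: "nat \<Rightarrow> nat \<Rightarrow> nat \<Rightarrow> nat" where
  "swp a b x = (if x = a then b else if x = b then a else x)"

lemma swp_swp[simp]: "swp a b (swp a b x) = x" unfolding swp_def by auto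

lemma jps_W_sym:
  assumes r: "r \<in> {1..H}" and r': "r' \<in> {1..H}"
  shows "(\<Sum>\<rho>\<in>PiE {..<n} (\<lambda>_. {1..H}). jps_W H n \<rho> r) = (\<Sum>\<rho>\<in>PiE {..<n} (\<lambda>_. {1..H}). jps_W H n \<rho> r')"
proof -
  let ?P = "PiE {..<n} (\<lambda>_. {1..H::nat})"
  let ?s = "swp r r'"
  define T where "T \<rho> = (\<lambda>j. if j < n then ?s (\<rho> j) else undefined)" for \<rho> :: "nat \<Rightarrow> nat"
  have sin: "?s x \<in> {1..H}" if "x \<in> {1..H}" for x using that r r' unfolding swp_def by auto
  have TP: "T \<rho> \<in> ?P" if "\<rho> \<in> ?P" for \<rho> using that sin unfolding T_def by (auto simp: PiE_iff extensional_def)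
  have TT: "T (T \<rho>) = \<rho>" if "\<rho> \<in> ?P" for \<rho> using that unfolding T_def by (auto simp: PiE_def extensional_def)
  have bij: "bij_betw T ?P ?P"
    by (rule bij_betwI[where g=T]) (use TP TT in auto)
  have N: "jps_N n (T \<rho>) s = jps_N n \<rho> (?s s)" for \<rho> s
    unfolding jps_N_def T_def
  proof (intro arg_cong[where f=card] Collect_cong)
    fix i
    have "swp r r' a = s \<longleftrightarrow> a = swp r r' s" for a by (auto simp: swp_def)
    thus "(i \<in> {..<n} \<and> (if i < n then swp r r' (\<rho> i) else undefined) = s) = (i \<in> {..<n} \<and> \<rho> i = swp r r' s)"
      by auto
  qed
  have d: "jps_d H n (T \<rho>) = jps_d H n \<rho>" for \<rho>
  proof -
    have "{x\<in>{1..H}. 0 < jps_N n (T \<rho>) x} = ?s ` {x\<in>{1..H}. 0 < jps_N n \<rho> x}"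
      unfolding N
    proof (rule set_eqI)
      fix x
      show "x \<in> {x\<in>{1..H}. 0 < jps_N n \<rho> (?s x)} \<longleftrightarrow> x \<in> ?s ` {x\<in>{1..H}. 0 < jps_N n \<rho> x}"
      proof
        assume "x \<in> {x\<in>{1..H}. 0 < jps_N n \<rho> (?s x)}"
        thus "x \<in> ?s ` {x\<in>{1..H}. 0 < jps_N n \<rho> x}"
          using sin by (intro image_eqI[of _ _ "?s x"]) auto
      next
        assume "x \<in> ?s ` {x\<in>{1..H}. 0 < jps_N n \<rho> x}"
        then obtain y where "x = ?s y" "y \<in> {1..H}" "0 < jps_N n \<rho> y" by auto
        thus "x \<in> {x\<in>{1..H}. 0 < jps_N n \<rho> (?s x)}" using sin by auto
      qed
    qed
    moreover have "inj ?s" by (rule injI) (metis swp_swp)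
    ultimately show ?thesis unfolding jps_d_def by (simp add: card_image inj_on_subset)
  qed
  have "(\<Sum>\<rho>\<in>?P. jps_W H n \<rho> r) = (\<Sum>\<rho>\<in>?P. jps_W H n (T \<rho>) r)"
    by (rule sum.reindex_bij_betw[OF bij, symmetric])
  also have "\<dots> = (\<Sum>\<rho>\<in>?P. jps_W H n \<rho> r')"
    unfolding jps_W_def N d by (simp add: swp_def)
  finally show ?thesis .
qed

lemma jps_W_total:
  assumes "n \<ge> 1" "r \<in> {1..H}"
  shows "(\<Sum>\<rho>\<in>PiE {..<n} (\<lambda>_. {1..H}). jps_W H n \<rho> r) = real H ^ n / real H"
proof -
  let ?P = "PiE {..<n} (\<lambda>_. {1..H::nat})"
  have "real H * (\<Sum>\<rho>\<in>?P. jps_W H n \<rho> r) = (\<Sum>r'=1..H. \<Sum>\<rho>\<in>?P. jps_W H n \<rho> r')"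
  proof -
    have "(\<Sum>r'=1..H. \<Sum>\<rho>\<in>?P. jps_W H n \<rho> r') = (\<Sum>r'=1..H. \<Sum>\<rho>\<in>?P. jps_W H n \<rho> r)"
    proof (rule sum.cong[OF refl])
      fix r' assume "r' \<in> {1..H}"
      thus "(\<Sum>\<rho>\<in>?P. jps_W H n \<rho> r') = (\<Sum>\<rho>\<in>?P. jps_W H n \<rho> r)"
        using jps_W_sym[OF _ assms(2)] by blast
    qed
    thus ?thesis by simp
  qed
  also have "\<dots> = (\<Sum>\<rho>\<in>?P. \<Sum>r'=1..H. jps_W H n \<rho> r')" by (rule sum.swap)
  also have "\<dots> = (\<Sum>\<rho>\<in>?P. 1)"
    by (intro sum.cong refl jps_W_sum assms(1)) (auto simp: PiE_def)
  also have "\<dots> = real H ^ n" by (simp add: card_PiE)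
  finally show ?thesis using assms by (simp add: field_simps)
qed

lemma jps_est_cong2:
  assumes "\<And>i r. i < n \<Longrightarrow> r \<in> {1..H} \<Longrightarrow> R i = r \<longleftrightarrow> R' i = r"
  shows "jps_est H n K x R t = jps_est H n K x R' t"
proof -
  have N: "jps_N n R r = jps_N n R' r" if "r \<in> {1..H}" for r
    unfolding jps_N_def using assms that by (intro arg_cong[where f=card] Collect_cong) auto
  have d: "jps_d H n R = jps_d H n R'" unfolding jps_d_def using N
    by (intro arg_cong[where f=card] Collect_cong) auto
  have W: "jps_W H n R r = jps_W H n R' r" if "r \<in> {1..H}" for r unfolding jps_W_def using N[OF that] d by simp
  have S: "jps_stratum n K x R r t = jps_stratum n K x R' r t" if "r \<in> {1..H}" for r
    unfolding jps_stratum_alt using N[OF that] assms that by (auto intro!: sum.cong)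
  show ?thesis unfolding jps_est_def using W S by (auto intro!: sum.cong)
qed

lemma sum_delta_fun:
  fixes \<Phi> :: "(nat \<Rightarrow> 'b) \<Rightarrow> real"
  assumes "\<And>j. j < n \<Longrightarrow> g j \<in> A" and fA: "finite A"
  shows "(\<Sum>\<rho>\<in>PiE {..<n} (\<lambda>_. A). (if \<forall>j<n. g j = \<rho> j then 1 else 0) * \<Phi> \<rho>) = \<Phi> (restrict g {..<n})"
proof -
  have mem: "restrict g {..<n} \<in> PiE {..<n} (\<lambda>_. A)" using assms by auto
  have "(\<Sum>\<rho>\<in>PiE {..<n} (\<lambda>_. A). (if \<forall>j<n. g j = \<rho> j then 1 else 0) * \<Phi> \<rho>)
      = (\<Sum>\<rho>\<in>PiE {..<n} (\<lambda>_. A). (if restrict g {..<n} = \<rho> then \<Phi> \<rho> else 0))"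
  proof (rule sum.cong[OF refl])
    fix \<rho> assume "\<rho> \<in> PiE {..<n} (\<lambda>_. A)"
    hence "(\<forall>j<n. g j = \<rho> j) \<longleftrightarrow> restrict g {..<n} = \<rho>"
      by (auto simp: PiE_iff extensional_def fun_eq_iff)
    thus "(if \<forall>j<n. g j = \<rho> j then 1 else 0) * \<Phi> \<rho> = (if restrict g {..<n} = \<rho> then \<Phi> \<rho> else 0)"
      by simp
  qed
  also have "\<dots> = \<Phi> (restrict g {..<n})"
    using mem fA by (subst sum.delta') (auto intro: finite_PiE)
  finally show ?thesis .
qed



theorem mainTheorem1:
  fixes H n :: nat
    and M :: "'a measure" and X :: "nat \<Rightarrow> 'a \<Rightarrow> real" and R :: "nat \<Rightarrow> 'a \<Rightarrow> nat"
    and N :: "'b measure" and Y :: "nat \<Rightarrow> 'b \<Rightarrow> real"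
    and F :: "real \<Rightarrow> real" and Fr :: "nat \<Rightarrow> real \<Rightarrow> real"
    and K :: "real \<Rightarrow> real" and t :: real
  assumes H: "H \<ge> 2" and n: "n \<ge> 1"
    and cdf_Fr: "\<And>r. r \<in> {1..H} \<Longrightarrow> is_cdf (Fr r)"
    and cdf_F: "is_cdf F"
    and consistent: "\<And>s. F s = (1 / real H) * (\<Sum>r=1..H. Fr r s)"
    and cdf_K: "is_cdf K"
    and M: "prob_space M"
    and indep_JPS: "prob_space.indep_vars M (\<lambda>_. borel \<Otimes>\<^sub>M count_space UNIV)
                      (\<lambda>i \<omega>. (X i \<omega>, R i \<omega>)) {..<n}"
    and R_range: "\<And>i. i < n \<Longrightarrow> measure M {\<omega> \<in> space M. R i \<omega> \<in> {1..H}} = 1"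
    and law_JPS: "\<And>i r s. i < n \<Longrightarrow> r \<in> {1..H} \<Longrightarrow>
                     measure M {\<omega> \<in> space M. X i \<omega> \<le> s \<and> R i \<omega> = r} = Fr r s / real H"
    and N: "prob_space N"
    and indep_SRS: "prob_space.indep_vars N (\<lambda>_. borel) Y {..<n}"
    and law_SRS: "\<And>i s. i < n \<Longrightarrow> measure N {\<omega> \<in> space N. Y i \<omega> \<le> s} = F s"
  shows "(\<integral>\<omega>. jps_est H n K (\<lambda>i. X i \<omega>) (\<lambda>i. R i \<omega>) t \<partial>M)
           = (1 / real H) * (\<Sum>r=1..H. \<integral>x. K (t - x) \<partial>(interval_measure (Fr r)))
       \<and> (1 / real H) * (\<Sum>r=1..H. \<integral>x. K (t - x) \<partial>(interval_measure (Fr r)))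
           = (\<integral>x. K (t - x) \<partial>(interval_measure F))
       \<and> (\<integral>x. K (t - x) \<partial>(interval_measure F))
           = (\<integral>\<omega>. srs_est n K (\<lambda>i. Y i \<omega>) t \<partial>N)"
proof -
  interpret M: prob_space M by (rule M)
  interpret N: prob_space N by (rule N)
  have Hpos: "real H > 0" using H by simp
  have Kmeas[measurable]: "K \<in> borel_measurable borel" by (rule is_cdf_measurable[OF cdf_K])
  have Kb: "0 \<le> K x" "K x \<le> 1" for x using is_cdf_bounds[OF cdf_K] by auto
  have XR: "(\<lambda>\<omega>. (X i \<omega>, R i \<omega>)) \<in> measurable M (borel \<Otimes>\<^sub>M count_space UNIV)" if "i < n" for i
    using indep_JPS that unfolding M.indep_vars_def by auto
  have Xm[measurable]: "X i \<in> borel_measurable M" if "i < n" for i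
    using measurable_compose[OF XR[OF that] measurable_fst] by (simp add: comp_def)
  have Rm[measurable]: "R i \<in> measurable M (count_space UNIV)" if "i < n" for i
    using measurable_compose[OF XR[OF that] measurable_snd] by (simp add: comp_def)
  have Ym[measurable]: "Y i \<in> borel_measurable N" if "i < n" for i
    using indep_SRS that unfolding N.indep_vars_def by auto
  have n0: "0 < n" using n by simp

  have rlaw: "(\<integral>x. f x \<partial>interval_measure (Fr r)) = real H * (\<integral>\<omega>. (if R i \<omega> = r then 1 else 0) * f (X i \<omega>) \<partial>M)"
    if i: "i < n" and r: "r \<in> {1..H}" and f[measurable]: "f \<in> borel_measurable borel" for i r f
  proof -
    have "(\<integral>x. f x \<partial>interval_measure (Fr r)) = (\<integral>\<omega>. (real H * (if R i \<omega> = r then 1 else 0)) * f (X i \<omega>) \<partial>M)"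
    proof (rule law_lemma[OF M cdf_Fr[OF r] Xm[OF i] _ _ _ _ f])
      show "(\<lambda>\<omega>. real H * (if R i \<omega> = r then 1 else 0)) \<in> borel_measurable M"
        using i by measurable
      show "integrable M (\<lambda>\<omega>. real H * (if R i \<omega> = r then 1 else 0))"
        using i by (intro M.integrable_const_bound[where B="real H"]) auto
      fix s
      have "(\<integral>\<omega>. real H * (if R i \<omega> = r then 1 else 0) * indicator {..s} (X i \<omega>) \<partial>M)
          = (\<integral>\<omega>. real H * indicator {\<omega> \<in> space M. X i \<omega> \<le> s \<and> R i \<omega> = r} \<omega> \<partial>M)"
        by (rule Bochner_Integration.integral_cong[OF refl]) (auto simp: indicator_def)
      also have "\<dots> = real H * measure M {\<omega> \<in> space M. X i \<omega> \<le> s \<and> R i \<omega> = r}"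
        using i by (subst integral_mult_right_zero) (simp add: Int_absorb2)
      also have "\<dots> = Fr r s" using law_JPS[OF i r] Hpos by simp
      finally show "(\<integral>\<omega>. real H * (if R i \<omega> = r then 1 else 0) * indicator {..s} (X i \<omega>) \<partial>M) = Fr r s" .
    qed auto
    also have "\<dots> = real H * (\<integral>\<omega>. (if R i \<omega> = r then 1 else 0) * f (X i \<omega>) \<partial>M)"
      by (subst integral_mult_right_zero[symmetric]) (simp add: mult.assoc)
    finally show ?thesis .
  qed
  define \<mu> where "\<mu> r = (\<integral>x. K (t - x) \<partial>interval_measure (Fr r))" for r
  have Ktm[measurable]: "(\<lambda>x. K (t - x)) \<in> borel_measurable borel" by measurable
  have probR: "(\<integral>\<omega>. (if R i \<omega> = r then 1 else 0) \<partial>M) = 1 / real H"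
    if i: "i < n" and r: "r \<in> {1..H}" for i r
  proof -
    note p = is_cdf_props[OF cdf_Fr[OF r]]
    have "emeasure (interval_measure (Fr r)) UNIV = 1"
      using interval_measure_UNIV[of "Fr r" 1] p by simp
    hence "measure (interval_measure (Fr r)) UNIV = 1" by (simp add: measure_def)
    hence "(\<integral>x. (1::real) \<partial>interval_measure (Fr r)) = 1" by (simp add: lebesgue_integral_const)
    with rlaw[OF i r, of "\<lambda>_. 1"] have "real H * (\<integral>\<omega>. (if R i \<omega> = r then 1 else 0) \<partial>M) = 1" by simp
    thus ?thesis using Hpos by (simp add: field_simps)
  qed
  have AER: "AE \<omega> in M. R i \<omega> \<in> {1..H}" if i: "i < n" for i
  proof -
    have "AE \<omega> in M. \<omega> \<in> {\<omega> \<in> space M. R i \<omega> \<in> {1..H}}"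
      by (rule M.AE_prob_1) (use R_range[OF i] in simp)
    thus ?thesis by simp
  qed
  have mix: "(1 / real H) * (\<Sum>r=1..H. \<integral>x. f x \<partial>interval_measure (Fr r)) = (\<integral>\<omega>. f (X 0 \<omega>) \<partial>M)"
    if f[measurable]: "f \<in> borel_measurable borel" and fb: "\<And>x. \<bar>f x\<bar> \<le> 1" for f
  proof -
    have "(1 / real H) * (\<Sum>r=1..H. \<integral>x. f x \<partial>interval_measure (Fr r))
        = (\<Sum>r=1..H. \<integral>\<omega>. (if R 0 \<omega> = r then 1 else 0) * f (X 0 \<omega>) \<partial>M)"
      using Hpos by (simp add: rlaw[OF n0] sum_distrib_left)
    also have "\<dots> = (\<integral>\<omega>. (\<Sum>r=1..H. (if R 0 \<omega> = r then 1 else 0) * f (X 0 \<omega>)) \<partial>M)"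
    proof (subst Bochner_Integration.integral_sum)
      fix r show "integrable M (\<lambda>\<omega>. (if R 0 \<omega> = r then 1 else 0) * f (X 0 \<omega>))"
        using n0 fb by (intro M.integrable_const_bound[where B=1]) auto
    qed simp
    also have "\<dots> = (\<integral>\<omega>. f (X 0 \<omega>) \<partial>M)"
    proof (rule integral_cong_AE)
      show "AE \<omega> in M. (\<Sum>r=1..H. (if R 0 \<omega> = r then 1 else 0) * f (X 0 \<omega>)) = f (X 0 \<omega>)"
        using AER[OF n0] by eventually_elim (simp add: sum_distrib_right[symmetric] sum.delta')
    qed (use n0 in measurable)
    finally show ?thesis .
  qed
  have eq2: "(1 / real H) * (\<Sum>r=1..H. \<mu> r) = (\<integral>x. K (t - x) \<partial>(interval_measure F))"
  proof -
    have "(\<integral>x. K (t - x) \<partial>(interval_measure F)) = (\<integral>\<omega>. (1::real) * K (t - X 0 \<omega>) \<partial>M)"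
    proof (rule law_lemma[OF M cdf_F Xm[OF n0]])
      fix s
      have "(\<integral>\<omega>. (1::real) * indicator {..s} (X 0 \<omega>) \<partial>M) = (1 / real H) * (\<Sum>r=1..H. \<integral>x. indicator {..s} x \<partial>interval_measure (Fr r))"
        by (subst mix) (auto simp: indicator_def)
      also have "\<dots> = (1 / real H) * (\<Sum>r=1..H. Fr r s)"
      proof -
        have "(\<integral>x. indicator {..s} x \<partial>interval_measure (Fr r)) = Fr r s" if r: "r \<in> {1..H}" for r
        proof -
          note p = is_cdf_props[OF cdf_Fr[OF r]]
          have "measure (interval_measure (Fr r)) {..s} = Fr r s"
            by (rule measure_interval_measure_Iic) (use p in auto)
          thus ?thesis by simp
        qed
        thus ?thesis by simp
      qed
      finally show "(\<integral>\<omega>. (1::real) * indicator {..s} (X 0 \<omega>) \<partial>M) = F s" using consistent by simp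
    qed auto
    also have "\<dots> = (1 / real H) * (\<Sum>r=1..H. \<mu> r)"
      unfolding \<mu>_def using Kb by (subst mix) auto
    finally show ?thesis by simp
  qed
  have eq3: "(\<integral>x. K (t - x) \<partial>(interval_measure F)) = (\<integral>\<omega>. srs_est n K (\<lambda>i. Y i \<omega>) t \<partial>N)"
  proof -
    have EY: "(\<integral>\<omega>. K (t - Y i \<omega>) \<partial>N) = (\<integral>x. K (t - x) \<partial>(interval_measure F))" if i: "i < n" for i
    proof -
      have "(\<integral>x. K (t - x) \<partial>(interval_measure F)) = (\<integral>\<omega>. (1::real) * K (t - Y i \<omega>) \<partial>N)"
      proof (rule law_lemma[OF N cdf_F Ym[OF i]])
        fix s
        have "(\<integral>\<omega>. (1::real) * indicator {..s} (Y i \<omega>) \<partial>N) = (\<integral>\<omega>. indicator {\<omega> \<in> space N. Y i \<omega> \<le> s} \<omega> \<partial>N)"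
          by (rule Bochner_Integration.integral_cong[OF refl]) (auto simp: indicator_def)
        also have "\<dots> = F s" using law_SRS[OF i] i by (simp add: Int_absorb2)
        finally show "(\<integral>\<omega>. (1::real) * indicator {..s} (Y i \<omega>) \<partial>N) = F s" .
      qed auto
      thus ?thesis by simp
    qed
    have "(\<integral>\<omega>. srs_est n K (\<lambda>i. Y i \<omega>) t \<partial>N) = (1 / real n) * (\<Sum>i<n. \<integral>\<omega>. K (t - Y i \<omega>) \<partial>N)"
      unfolding srs_est_def
    proof (subst integral_mult_right_zero, subst Bochner_Integration.integral_sum)
      fix i assume "i \<in> {..<n}"
      thus "integrable N (\<lambda>\<omega>. K (t - Y i \<omega>))"
        using Kb by (intro N.integrable_const_bound[where B=1]) auto
    qed simp
    also have "\<dots> = (\<integral>x. K (t - x) \<partial>(interval_measure F))"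
      using EY n0 by simp
    finally show ?thesis by simp
  qed
  let ?P = "PiE {..<n} (\<lambda>_. {1..H::nat})"
  define ind where "ind \<rho> \<omega> = (if \<forall>j<n. R j \<omega> = \<rho> j then 1 else (0::real))" for \<rho> :: "nat \<Rightarrow> nat" and \<omega>
  have ind_m[measurable]: "ind \<rho> \<in> borel_measurable M" for \<rho>
    unfolding ind_def by measurable
  have G_int: "integrable M (\<lambda>\<omega>. ind \<rho> \<omega> * K (t - X i \<omega>))" if i: "i < n" for \<rho> i
    using i Kb by (intro M.integrable_const_bound[where B=1]) (auto simp: ind_def)
  have E1: "(\<integral>\<omega>. ind \<rho> \<omega> * K (t - X i \<omega>) \<partial>M) = \<mu> (\<rho> i) / real H ^ n"
    if i: "i < n" and \<rho>: "\<rho> \<in> ?P" for i \<rho>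
  proof -
    define \<phi> where "\<phi> j p = (if snd p = \<rho> j then 1 else 0) * (if j = i then K (t - fst p) else (1::real))"
      for j and p :: "real \<times> nat"
    define h where "h j \<omega> = \<phi> j (X j \<omega>, R j \<omega>)" for j \<omega>
    have prodeq: "(\<Prod>j<n. h j \<omega>) = ind \<rho> \<omega> * K (t - X i \<omega>)" for \<omega>
    proof -
      have "(\<Prod>j<n. h j \<omega>) = (\<Prod>j<n. (if R j \<omega> = \<rho> j then 1 else 0::real)) * (\<Prod>j<n. if j = i then K (t - X j \<omega>) else 1)"
        unfolding h_def \<phi>_def by (simp add: prod.distrib)
      also have "(\<Prod>j<n. (if R j \<omega> = \<rho> j then 1 else 0::real)) = ind \<rho> \<omega>"
      proof (cases "\<forall>j<n. R j \<omega> = \<rho> j")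
        case True thus ?thesis by (simp add: ind_def)
      next
        case False then obtain j where "j < n" "R j \<omega> \<noteq> \<rho> j" by auto
        thus ?thesis using False by (auto simp: ind_def intro!: prod_zero bexI[of _ j])
      qed
      also have "(\<Prod>j<n. if j = i then K (t - X j \<omega>) else 1) = K (t - X i \<omega>)"
        using i by (simp add: prod.delta)
      finally show ?thesis .
    qed
    have \<phi>m: "\<phi> j \<in> borel_measurable (borel \<Otimes>\<^sub>M count_space UNIV)" for j
      unfolding \<phi>_def by measurable
    have indep: "M.indep_vars (\<lambda>_. borel) h {..<n}"
      unfolding h_def by (rule M.indep_vars_compose2[OF indep_JPS \<phi>m])
    have hm: "h j \<in> borel_measurable M" if "j < n" for j
      unfolding h_def using measurable_compose[OF XR[OF that] \<phi>m[of j]] by simp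
    have hint: "integrable M (h j)" if "j \<in> {..<n}" for j
      using that Kb hm by (intro M.integrable_const_bound[where B=1]) (auto simp: h_def \<phi>_def)
    have "(\<integral>\<omega>. ind \<rho> \<omega> * K (t - X i \<omega>) \<partial>M) = (\<integral>\<omega>. (\<Prod>j<n. h j \<omega>) \<partial>M)"
      by (simp add: prodeq)
    also have "\<dots> = (\<Prod>j<n. \<integral>\<omega>. h j \<omega> \<partial>M)"
      by (rule M.indep_vars_lebesgue_integral[OF _ indep hint]) auto
    also have "\<dots> = (\<integral>\<omega>. h i \<omega> \<partial>M) * (\<Prod>j\<in>{..<n} - {i}. \<integral>\<omega>. h j \<omega> \<partial>M)"
      using i by (subst prod.remove[of _ i]) auto
    also have "(\<integral>\<omega>. h i \<omega> \<partial>M) = \<mu> (\<rho> i) / real H"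
    proof -
      have ri: "\<rho> i \<in> {1..H}" using \<rho> i by (auto simp: PiE_iff)
      have "\<mu> (\<rho> i) = real H * (\<integral>\<omega>. h i \<omega> \<partial>M)"
        unfolding \<mu>_def rlaw[OF i ri Ktm] by (simp add: h_def \<phi>_def)
      thus ?thesis using Hpos by (simp add: field_simps)
    qed
    also have "(\<Prod>j\<in>{..<n} - {i}. \<integral>\<omega>. h j \<omega> \<partial>M) = (\<Prod>j\<in>{..<n} - {i}. 1 / real H)"
    proof (rule prod.cong[OF refl])
      fix j assume j: "j \<in> {..<n} - {i}"
      hence rj: "\<rho> j \<in> {1..H}" using \<rho> by (auto simp: PiE_iff)
      show "(\<integral>\<omega>. h j \<omega> \<partial>M) = 1 / real H"
        using probR[OF _ rj, of j] j by (simp add: h_def \<phi>_def)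
    qed
    also have "\<dots> = (1 / real H) ^ (n - 1)" using i by simp
    finally have "(\<integral>\<omega>. ind \<rho> \<omega> * K (t - X i \<omega>) \<partial>M) = \<mu> (\<rho> i) / real H * (1 / real H) ^ (n - 1)" .
    moreover have "real H ^ n = real H * real H ^ (n - 1)" using n0 by (cases n) auto
    ultimately show ?thesis using Hpos by (simp add: field_simps power_one_over)
  qed
  define c where "c \<rho> r i = jps_W H n \<rho> r * (1 / real (jps_N n \<rho> r)) * (if \<rho> i = r then 1 else (0::real))"
    for \<rho> r i
  have jps_alt: "jps_est H n K x \<rho> t = (\<Sum>r=1..H. \<Sum>i<n. c \<rho> r i * K (t - x i))" for x \<rho>
    unfolding jps_est_def jps_stratum_alt c_def by (simp add: sum_distrib_left mult_ac)
  define R' where "R' j \<omega> = (if R j \<omega> \<in> {1..H} then R j \<omega> else 0)" for j \<omega>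
  have jps_meas: "(\<lambda>\<omega>. jps_est H n K (\<lambda>i. X i \<omega>) (\<lambda>i. R i \<omega>) t) \<in> borel_measurable M"
  proof -
    have rep: "jps_est H n K (\<lambda>i. X i \<omega>) (\<lambda>i. R i \<omega>) t =
      (\<Sum>\<rho>\<in>PiE {..<n} (\<lambda>_. {0..H}). (if \<forall>j<n. R' j \<omega> = \<rho> j then 1 else 0) * (\<Sum>r=1..H. \<Sum>i<n. c \<rho> r i * K (t - X i \<omega>)))" for \<omega>
    proof -
      have "(\<Sum>\<rho>\<in>PiE {..<n} (\<lambda>_. {0..H}). (if \<forall>j<n. R' j \<omega> = \<rho> j then 1 else 0) * jps_est H n K (\<lambda>i. X i \<omega>) \<rho> t)
          = jps_est H n K (\<lambda>i. X i \<omega>) (restrict (\<lambda>j. R' j \<omega>) {..<n}) t"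
        by (rule sum_delta_fun) (auto simp: R'_def)
      also have "\<dots> = jps_est H n K (\<lambda>i. X i \<omega>) (\<lambda>j. R' j \<omega>) t"
        by (rule jps_est_cong) simp
      also have "\<dots> = jps_est H n K (\<lambda>i. X i \<omega>) (\<lambda>i. R i \<omega>) t"
        by (rule jps_est_cong2) (auto simp: R'_def)
      finally show ?thesis by (simp add: jps_alt)
    qed
    have bm: "(\<lambda>\<omega>. (\<Sum>\<rho>\<in>PiE {..<n} (\<lambda>_. {0..H}). (if \<forall>j<n. R' j \<omega> = \<rho> j then 1 else 0) * (\<Sum>r=1..H. \<Sum>i<n. c \<rho> r i * K (t - X i \<omega>)))) \<in> borel_measurable M"
      unfolding R'_def by measurable
    show ?thesis unfolding rep by (rule bm)
  qed
  have eq1: "(\<integral>\<omega>. jps_est H n K (\<lambda>i. X i \<omega>) (\<lambda>i. R i \<omega>) t \<partial>M) = (1 / real H) * (\<Sum>r=1..H. \<mu> r)"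
  proof -
    have "(\<integral>\<omega>. jps_est H n K (\<lambda>i. X i \<omega>) (\<lambda>i. R i \<omega>) t \<partial>M)
        = (\<integral>\<omega>. (\<Sum>\<rho>\<in>?P. \<Sum>r=1..H. \<Sum>i<n. c \<rho> r i * (ind \<rho> \<omega> * K (t - X i \<omega>))) \<partial>M)"
    proof (rule integral_cong_AE[OF jps_meas])
      show "(\<lambda>\<omega>. \<Sum>\<rho>\<in>?P. \<Sum>r=1..H. \<Sum>i<n. c \<rho> r i * (ind \<rho> \<omega> * K (t - X i \<omega>))) \<in> borel_measurable M"
        by measurable
      have "AE \<omega> in M. \<forall>j\<in>{..<n}. R j \<omega> \<in> {1..H}"
        by (rule AE_finite_allI) (use AER in simp_all)
      thus "AE \<omega> in M. jps_est H n K (\<lambda>i. X i \<omega>) (\<lambda>i. R i \<omega>) t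
          = (\<Sum>\<rho>\<in>?P. \<Sum>r=1..H. \<Sum>i<n. c \<rho> r i * (ind \<rho> \<omega> * K (t - X i \<omega>)))"
      proof eventually_elim
        case (elim \<omega>)
        have "(\<Sum>\<rho>\<in>?P. \<Sum>r=1..H. \<Sum>i<n. c \<rho> r i * (ind \<rho> \<omega> * K (t - X i \<omega>)))
            = (\<Sum>\<rho>\<in>?P. (if \<forall>j<n. R j \<omega> = \<rho> j then 1 else 0) * jps_est H n K (\<lambda>i. X i \<omega>) \<rho> t)"
          unfolding jps_alt ind_def sum_distrib_left by (intro sum.cong refl) (simp add: mult_ac)
        also have "\<dots> = jps_est H n K (\<lambda>i. X i \<omega>) (restrict (\<lambda>j. R j \<omega>) {..<n}) t"
          by (rule sum_delta_fun) (use elim in auto)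
        also have "\<dots> = jps_est H n K (\<lambda>i. X i \<omega>) (\<lambda>i. R i \<omega>) t"
          by (rule jps_est_cong) simp
        finally show ?case by simp
      qed
    qed
    also have "\<dots> = (\<Sum>\<rho>\<in>?P. \<Sum>r=1..H. \<Sum>i<n. c \<rho> r i * (\<integral>\<omega>. ind \<rho> \<omega> * K (t - X i \<omega>) \<partial>M))"
    proof -
      have I3: "integrable M (\<lambda>\<omega>. \<Sum>i<n. c \<rho> r i * (ind \<rho> \<omega> * K (t - X i \<omega>)))" for \<rho> r
        by (intro Bochner_Integration.integrable_sum integrable_mult_right G_int) auto
      have I2: "integrable M (\<lambda>\<omega>. \<Sum>r=1..H. \<Sum>i<n. c \<rho> r i * (ind \<rho> \<omega> * K (t - X i \<omega>)))" for \<rho>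
        by (intro Bochner_Integration.integrable_sum I3)
      have L3: "(\<integral>\<omega>. (\<Sum>i<n. c \<rho> r i * (ind \<rho> \<omega> * K (t - X i \<omega>))) \<partial>M) = (\<Sum>i<n. c \<rho> r i * (\<integral>\<omega>. ind \<rho> \<omega> * K (t - X i \<omega>) \<partial>M))" for \<rho> r
        by (subst Bochner_Integration.integral_sum) (auto intro!: G_int)
      have L2: "(\<integral>\<omega>. (\<Sum>r=1..H. \<Sum>i<n. c \<rho> r i * (ind \<rho> \<omega> * K (t - X i \<omega>))) \<partial>M) = (\<Sum>r=1..H. \<Sum>i<n. c \<rho> r i * (\<integral>\<omega>. ind \<rho> \<omega> * K (t - X i \<omega>) \<partial>M))" for \<rho>
        by (subst Bochner_Integration.integral_sum) (auto intro!: I3 simp only: L3)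
      show ?thesis
        by (subst Bochner_Integration.integral_sum) (auto intro!: I2 simp only: L2)
    qed
    also have "\<dots> = (\<Sum>\<rho>\<in>?P. \<Sum>r=1..H. jps_W H n \<rho> r * \<mu> r / real H ^ n)"
    proof (intro sum.cong refl)
      fix \<rho> r assume \<rho>: "\<rho> \<in> ?P" and r: "r \<in> {1..H}"
      have cnt: "(\<Sum>i<n. if \<rho> i = r then 1 else (0::real)) = real (jps_N n \<rho> r)"
        unfolding jps_N_def by (simp add: sum.If_cases Int_def conj_commute)
      have WN: "jps_W H n \<rho> r * (1 / real (jps_N n \<rho> r)) * real (jps_N n \<rho> r) = jps_W H n \<rho> r"
        unfolding jps_W_def by auto
      have "(\<Sum>i<n. c \<rho> r i * (\<integral>\<omega>. ind \<rho> \<omega> * K (t - X i \<omega>) \<partial>M))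
          = (\<Sum>i<n. c \<rho> r i * (\<mu> (\<rho> i) / real H ^ n))"
        using E1 \<rho> by (intro sum.cong) auto
      also have "\<dots> = (\<Sum>i<n. (jps_W H n \<rho> r * (1 / real (jps_N n \<rho> r)) * (\<mu> r / real H ^ n)) * (if \<rho> i = r then 1 else 0))"
        unfolding c_def by (intro sum.cong) auto
      also have "\<dots> = jps_W H n \<rho> r * (1 / real (jps_N n \<rho> r)) * real (jps_N n \<rho> r) * (\<mu> r / real H ^ n)"
        unfolding sum_distrib_left[symmetric] cnt by (simp only: ac_simps)
      also have "\<dots> = jps_W H n \<rho> r * \<mu> r / real H ^ n"
        unfolding WN by simp
      finally show "(\<Sum>i<n. c \<rho> r i * (\<integral>\<omega>. ind \<rho> \<omega> * K (t - X i \<omega>) \<partial>M)) = jps_W H n \<rho> r * \<mu> r / real H ^ n" .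
    qed
    also have "\<dots> = (\<Sum>r=1..H. (\<mu> r / real H ^ n) * (\<Sum>\<rho>\<in>?P. jps_W H n \<rho> r))"
      by (subst sum.swap) (simp add: sum_distrib_left mult_ac)
    also have "\<dots> = (\<Sum>r=1..H. (\<mu> r / real H ^ n) * (real H ^ n / real H))"
      using jps_W_total[OF n] by (intro sum.cong) auto
    also have "\<dots> = (1 / real H) * (\<Sum>r=1..H. \<mu> r)"
      using Hpos by (simp add: sum_distrib_left)
    finally show ?thesis .
  qed
  show ?thesis using eq1 eq2 eq3 unfolding \<mu>_def by simp
qed

end
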